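(* Let $G=(V,E)$ be a simple 2-vertex-connected graph and let $e=uv\in E$ be an irrelevant edge of $G$. Then there exists a minimum-size 2-edge-connected spanning subgraph of $G$ not containing $e$.
   Context: A $k$-vertex-cut of $G$ is a set of $k$ nodes whose removal leaves a graph with at least two connected components; $G$ is 2-vertex-connected (2VC) if it has at least 3 nodes, is connected, and has no 1-vertex-cut. An edge $uv\in E$ is irrelevant if $\{u,v\}$ is a 2-vertex-cut of $G$. A graph is 2-edge-connected (2EC) if it is connected and remains connected after removing any single edge; a spanning subgraph is a subgraph on all nodes of $V$, identified with its edge set. *)

theory Defs
  imports Main
begin

definition simple_graph :: "'a set \<Rightarrow> 'a set set \<Rightarrow> bool" where
  "simple_graph V E \<longleftrightarrow> finite V \<and>
     (\<forall>e\<in>E. \<exists>u v. e = {u, v} \<and> u \<noteq> v \<and> u \<in> V \<and> v \<in> V)"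

definition adj :: "'a set set \<Rightarrow> 'a \<Rightarrow> 'a \<Rightarrow> bool" where
  "adj F x y \<longleftrightarrow> {x, y} \<in> F \<and> x \<noteq> y"

definition reach :: "'a set set \<Rightarrow> 'a \<Rightarrow> 'a \<Rightarrow> bool" where
  "reach F = (adj F)\<^sup>*\<^sup>*"

definition connected_graph :: "'a set \<Rightarrow> 'a set set \<Rightarrow> bool" where
  "connected_graph V F \<longleftrightarrow> V \<noteq> {} \<and> (\<forall>x\<in>V. \<forall>y\<in>V. reach F x y)"

definition del_vertices_E :: "'a set set \<Rightarrow> 'a set \<Rightarrow> 'a set set" where
  "del_vertices_E E S = {e \<in> E. e \<inter> S = {}}"

definition vertex_cut :: "'a set \<Rightarrow> 'a set set \<Rightarrow> nat \<Rightarrow> 'a set \<Rightarrow> bool" where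
  "vertex_cut V E k S \<longleftrightarrow> S \<subseteq> V \<and> card S = k \<and>
     (\<exists>x\<in>V - S. \<exists>y\<in>V - S. \<not> reach (del_vertices_E E S) x y)"

definition two_vertex_connected :: "'a set \<Rightarrow> 'a set set \<Rightarrow> bool" where
  "two_vertex_connected V E \<longleftrightarrow> card V \<ge> 3 \<and> connected_graph V E \<and>
     \<not> (\<exists>S. vertex_cut V E 1 S)"

definition irrelevant_edge :: "'a set \<Rightarrow> 'a set set \<Rightarrow> 'a \<Rightarrow> 'a \<Rightarrow> bool" where
  "irrelevant_edge V E u v \<longleftrightarrow> {u, v} \<in> E \<and> vertex_cut V E 2 {u, v}"

definition two_edge_connected :: "'a set \<Rightarrow> 'a set set \<Rightarrow> bool" where
  "two_edge_connected V F \<longleftrightarrow> connected_graph V F \<and>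
     (\<forall>e\<in>F. connected_graph V (F - {e}))"

definition spanning_2ec :: "'a set \<Rightarrow> 'a set set \<Rightarrow> 'a set set \<Rightarrow> bool" where
  "spanning_2ec V E H \<longleftrightarrow> H \<subseteq> E \<and> two_edge_connected V H"

definition min_2ecss :: "'a set \<Rightarrow> 'a set set \<Rightarrow> 'a set set \<Rightarrow> bool" where
  "min_2ecss V E H \<longleftrightarrow> spanning_2ec V E H \<and>
     (\<forall>H'. spanning_2ec V E H' \<longrightarrow> card H \<le> card H')"

end

theory Submission
  imports Defs
begin


lemma reach_refl[simp]: "reach F x x" by (simp add: reach_def)
lemma reach_step: "reach F x y \<Longrightarrow> adj F y z \<Longrightarrow> reach F x z"
  unfolding reach_def by (rule rtranclp.rtrancl_into_rtrancl)
lemma adj_sym: "adj F x y \<Longrightarrow> adj F y x" unfolding adj_def by (metis insert_commute)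
lemma reach_trans: "reach F x y \<Longrightarrow> reach F y z \<Longrightarrow> reach F x z"
  unfolding reach_def by (rule rtranclp_trans)
lemma reach_sym: "reach F x y \<Longrightarrow> reach F y x"
  unfolding reach_def
proof (induction rule: rtranclp_induct)
  case base then show ?case by simp
next
  case (step y z) then show ?case
    by (meson adj_sym converse_rtranclp_into_rtranclp)
qed
lemma reach_mono: assumes "F \<subseteq> G" "reach F x y" shows "reach G x y"
  using assms(2) unfolding reach_def
proof induction
  case base then show ?case by simp
next
  case (step y z)
  then have "adj G y z" using assms(1) unfolding adj_def by blast
  then show ?case using step(3) by (rule rtranclp.rtrancl_into_rtrancl[rotated])
qed
lemma reach_cross: "reach F x y \<Longrightarrow> x \<in> S \<Longrightarrow> y \<notin> S \<Longrightarrow> \<exists>a b. adj F a b \<and> a \<in> S \<and> b \<notin> S"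
  unfolding reach_def
proof (induction rule: rtranclp_induct)
  case base then show ?case by simp
next
  case (step y z)
  show ?case
  proof (cases "y \<in> S")
    case True then show ?thesis using step.hyps(2) step.prems(2) by blast
  next
    case False then show ?thesis using step.IH step.prems(1) by blast
  qed
qed
lemma reach_closed:
  assumes r: "reach F x y" and x: "x \<in> S" and cl: "\<And>a b. adj F a b \<Longrightarrow> a \<in> S \<Longrightarrow> b \<in> S"
  shows "y \<in> S"
proof (rule ccontr)
  assume "y \<notin> S"
  from reach_cross[OF r x this] obtain a b where "adj F a b" "a \<in> S" "b \<notin> S" by blast
  then show False using cl by blast
qed

definition ecut :: "'a set set \<Rightarrow> 'a set \<Rightarrow> 'a set set" where
  "ecut F S = {f\<in>F. \<exists>a b. f = {a,b} \<and> a \<in> S \<and> b \<notin> S}"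

definition edges_in :: "'a set set \<Rightarrow> 'a set \<Rightarrow> bool" where
  "edges_in F V \<longleftrightarrow> (\<forall>f\<in>F. \<exists>a b. f = {a,b} \<and> a \<in> V \<and> b \<in> V)"

lemma edges_in_mem: "edges_in F V \<Longrightarrow> {a,b} \<in> F \<Longrightarrow> a \<in> V \<and> b \<in> V"
proof -
  assume "edges_in F V" "{a,b} \<in> F"
  then obtain p q where "{a,b} = {p,q}" "p \<in> V" "q \<in> V" unfolding edges_in_def by blast
  then show ?thesis by (auto simp: doubleton_eq_iff)
qed

lemma conn_iff:
  assumes "edges_in F V"
  shows "connected_graph V F \<longleftrightarrow> V \<noteq> {} \<and> (\<forall>S. S \<subseteq> V \<longrightarrow> S \<noteq> {} \<longrightarrow> S \<noteq> V \<longrightarrow> ecut F S \<noteq> {})"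
proof
  assume c: "connected_graph V F"
  show "V \<noteq> {} \<and> (\<forall>S. S \<subseteq> V \<longrightarrow> S \<noteq> {} \<longrightarrow> S \<noteq> V \<longrightarrow> ecut F S \<noteq> {})"
  proof (intro conjI allI impI)
    show "V \<noteq> {}" using c by (simp add: connected_graph_def)
    fix S assume S: "S \<subseteq> V" "S \<noteq> {}" "S \<noteq> V"
    then obtain x y where "x \<in> S" "y \<in> V" "y \<notin> S" by blast
    moreover have "reach F x y" using c \<open>x \<in> S\<close> S(1) \<open>y \<in> V\<close> unfolding connected_graph_def by blast
    ultimately obtain a b where "adj F a b" "a \<in> S" "b \<notin> S" using reach_cross by metis
    then have "{a,b} \<in> F" by (simp add: adj_def)
    then have "{a,b} \<in> ecut F S" using \<open>a \<in> S\<close> \<open>b \<notin> S\<close> unfolding ecut_def by blast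
    then show "ecut F S \<noteq> {}" by blast
  qed
next
  assume h: "V \<noteq> {} \<and> (\<forall>S. S \<subseteq> V \<longrightarrow> S \<noteq> {} \<longrightarrow> S \<noteq> V \<longrightarrow> ecut F S \<noteq> {})"
  show "connected_graph V F" unfolding connected_graph_def
  proof (intro conjI ballI)
    show "V \<noteq> {}" using h by blast
    fix x y assume x: "x \<in> V" and y: "y \<in> V"
    define S where "S = {z\<in>V. reach F x z}"
    show "reach F x y"
    proof (rule ccontr)
      assume "\<not> reach F x y"
      then have "y \<notin> S" using S_def by simp
      then have "S \<noteq> V" using y by blast
      moreover have "x \<in> S" using x S_def by simp
      moreover have "S \<subseteq> V" using S_def by blast
      ultimately have "ecut F S \<noteq> {}" using h[THEN conjunct2, rule_format, of S] by blast
      then obtain f where "f \<in> ecut F S" by blast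
      then obtain a b where ab: "{a,b} \<in> F" "a \<in> S" "b \<notin> S" unfolding ecut_def by blast
      obtain p q where pq: "{a,b} = {p,q}" "p \<in> V" "q \<in> V" using assms ab(1) unfolding edges_in_def by blast
      then have "b \<in> V" by (auto simp: doubleton_eq_iff)
      have "a \<noteq> b" using ab by blast
      have "reach F x a" using ab(2) S_def by simp
      moreover have "adj F a b" using ab(1) \<open>a \<noteq> b\<close> by (simp add: adj_def)
      ultimately have "reach F x b" by (rule reach_step)
      then have "b \<in> S" using \<open>b \<in> V\<close> S_def by simp
      then show False using ab by blast
    qed
  qed
qed

lemma cut_diff: "ecut (F - {f}) S = ecut F S - {f}" unfolding ecut_def by blast

lemma edges_in_diff: "edges_in F V \<Longrightarrow> edges_in (F - X) V" unfolding edges_in_def by blast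

lemma tec_iff:
  assumes "edges_in F V"
  shows "two_edge_connected V F \<longleftrightarrow> V \<noteq> {} \<and> (\<forall>S. S \<subseteq> V \<longrightarrow> S \<noteq> {} \<longrightarrow> S \<noteq> V \<longrightarrow> (\<forall>h. \<not> ecut F S \<subseteq> {h}))"
proof -
  have ci: "connected_graph V (F - {f}) \<longleftrightarrow> V \<noteq> {} \<and> (\<forall>S. S \<subseteq> V \<longrightarrow> S \<noteq> {} \<longrightarrow> S \<noteq> V \<longrightarrow> \<not> ecut F S \<subseteq> {f})" for f
  proof -
    have "connected_graph V (F - {f}) \<longleftrightarrow> V \<noteq> {} \<and> (\<forall>S. S \<subseteq> V \<longrightarrow> S \<noteq> {} \<longrightarrow> S \<noteq> V \<longrightarrow> ecut (F - {f}) S \<noteq> {})"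
      by (rule conn_iff[OF edges_in_diff[OF assms]])
    moreover have "ecut (F - {f}) S \<noteq> {} \<longleftrightarrow> \<not> ecut F S \<subseteq> {f}" for S
      unfolding cut_diff by blast
    ultimately show ?thesis by (simp only:)
  qed
  have c0: "connected_graph V F \<longleftrightarrow> V \<noteq> {} \<and> (\<forall>S. S \<subseteq> V \<longrightarrow> S \<noteq> {} \<longrightarrow> S \<noteq> V \<longrightarrow> ecut F S \<noteq> {})"
    using conn_iff[OF assms] .
  have sub: "ecut F S \<subseteq> F" for S unfolding ecut_def by blast
  show ?thesis unfolding two_edge_connected_def
  proof
    assume a: "connected_graph V F \<and> (\<forall>e\<in>F. connected_graph V (F - {e}))"
    then have a1: "connected_graph V F" and a2: "\<And>e. e \<in> F \<Longrightarrow> connected_graph V (F - {e})" by auto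
    have VV: "V \<noteq> {}" using a1 c0 by simp
    have "\<not> ecut F S \<subseteq> {h}" if S: "S \<subseteq> V" "S \<noteq> {}" "S \<noteq> V" for S h
    proof (cases "h \<in> F")
      case True
      then have "connected_graph V (F - {h})" by (rule a2)
      then have "\<forall>S. S \<subseteq> V \<longrightarrow> S \<noteq> {} \<longrightarrow> S \<noteq> V \<longrightarrow> \<not> ecut F S \<subseteq> {h}" unfolding ci by (rule conjunct2)
      then show ?thesis using S by blast
    next
      case False
      have "ecut F S \<noteq> {}" using a1 S unfolding c0 by blast
      then show ?thesis using sub[of S] False by blast
    qed
    then show "V \<noteq> {} \<and> (\<forall>S. S \<subseteq> V \<longrightarrow> S \<noteq> {} \<longrightarrow> S \<noteq> V \<longrightarrow> (\<forall>h. \<not> ecut F S \<subseteq> {h}))"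
      using VV by blast
  next
    assume a: "V \<noteq> {} \<and> (\<forall>S. S \<subseteq> V \<longrightarrow> S \<noteq> {} \<longrightarrow> S \<noteq> V \<longrightarrow> (\<forall>h. \<not> ecut F S \<subseteq> {h}))"
    have "connected_graph V F" unfolding c0
    proof (intro conjI allI impI)
      show "V \<noteq> {}" using a by blast
      fix S assume "S \<subseteq> V" "S \<noteq> {}" "S \<noteq> V"
      then have "\<not> ecut F S \<subseteq> {undefined}" using a by blast
      then show "ecut F S \<noteq> {}" by blast
    qed
    moreover have "\<forall>e\<in>F. connected_graph V (F - {e})"
    proof
      fix e assume "e \<in> F"
      show "connected_graph V (F - {e})" unfolding ci
      proof (intro conjI allI impI)
        show "V \<noteq> {}" using a by blast
        fix S assume "S \<subseteq> V" "S \<noteq> {}" "S \<noteq> V"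
        then show "\<not> ecut F S \<subseteq> {e}" using a by blast
      qed
    qed
    ultimately show "connected_graph V F \<and> (\<forall>e\<in>F. connected_graph V (F - {e}))" ..
  qed
qed

lemma cut_compl:
  assumes "edges_in F V" "S \<subseteq> V"
  shows "ecut F (V - S) = ecut F S"
proof -
  have "f \<in> ecut F (V - S) \<longleftrightarrow> f \<in> ecut F S" for f
  proof
    assume "f \<in> ecut F (V - S)"
    then obtain a b where "f \<in> F" "f = {a,b}" "a \<in> V - S" "b \<notin> V - S" unfolding ecut_def by blast
    moreover have "b \<in> V" using edges_in_mem[OF assms(1)] \<open>f \<in> F\<close> \<open>f = {a,b}\<close> by blast
    moreover have "f = {b,a}" using \<open>f = {a,b}\<close> by (simp add: insert_commute)
    ultimately show "f \<in> ecut F S" unfolding ecut_def by blast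
  next
    assume "f \<in> ecut F S"
    then obtain a b where "f \<in> F" "f = {a,b}" "a \<in> S" "b \<notin> S" unfolding ecut_def by blast
    moreover have "b \<in> V" using edges_in_mem[OF assms(1)] \<open>f \<in> F\<close> \<open>f = {a,b}\<close> by blast
    moreover have "f = {b,a}" using \<open>f = {a,b}\<close> by (simp add: insert_commute)
    moreover have "b \<in> V - S" "a \<notin> V - S" using \<open>b \<in> V\<close> \<open>b \<notin> S\<close> \<open>a \<in> S\<close> by auto
    ultimately show "f \<in> ecut F (V - S)" unfolding ecut_def by blast
  qed
  then show ?thesis by blast
qed




locale ctx =
  fixes V :: "'a set" and E :: "'a set set" and H :: "'a set set" and u v :: 'a
  assumes sg: "simple_graph V E"
    and HE: "H \<subseteq> E"
    and Htec: "\<And>S h. S \<subseteq> V \<Longrightarrow> S \<noteq> {} \<Longrightarrow> S \<noteq> V \<Longrightarrow> \<not> ecut H S \<subseteq> {h}"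
    and eH: "{u,v} \<in> H" and uv: "u \<noteq> v" and uV: "u \<in> V" and vV: "v \<in> V"
    and cu: "\<And>x y. x \<in> V - {u} \<Longrightarrow> y \<in> V - {u} \<Longrightarrow> reach (del_vertices_E E {u}) x y"
    and cv: "\<And>x y. x \<in> V - {v} \<Longrightarrow> y \<in> V - {v} \<Longrightarrow> reach (del_vertices_E E {v}) x y"
begin

abbreviation "E' \<equiv> del_vertices_E E {u,v}"
definition Comp :: "'a \<Rightarrow> 'a set" where "Comp c = {y \<in> V - {u,v}. reach E' c y}"
definition "H' = H - {{u,v}}"
definition tight :: "'a set \<Rightarrow> 'a set \<Rightarrow> bool" where
  "tight S h \<longleftrightarrow> S \<subseteq> V \<and> u \<in> S \<and> v \<notin> S \<and> ecut H' S \<subseteq> {h}"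

lemma edgeE: "f \<in> E \<Longrightarrow> \<exists>a b. f = {a,b} \<and> a \<noteq> b \<and> a \<in> V \<and> b \<in> V"
  using sg by (auto simp: simple_graph_def)

lemma edge_V: "{a,b} \<in> E \<Longrightarrow> a \<in> V \<and> b \<in> V \<and> a \<noteq> b"
proof -
  assume "{a,b} \<in> E"
  then obtain p q where "{a,b} = {p,q}" "p \<noteq> q" "p \<in> V" "q \<in> V" using edgeE by blast
  then show ?thesis by (auto simp: doubleton_eq_iff)
qed

lemma edges_in_E: "F \<subseteq> E \<Longrightarrow> edges_in F V"
  unfolding edges_in_def using edgeE by blast

lemma H_V: "{a,b} \<in> H \<Longrightarrow> a \<in> V \<and> b \<in> V \<and> a \<noteq> b" using HE edge_V by blast

lemma W_contra: "W \<subseteq> V \<Longrightarrow> u \<notin> W \<Longrightarrow> W \<noteq> {} \<Longrightarrow> ecut H W \<subseteq> {h} \<Longrightarrow> False"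
  using Htec[of W h] uV by blast

lemma Comp_sub: "Comp c \<subseteq> V - {u,v}" by (auto simp: Comp_def)

lemma Comp_close: "a \<in> Comp c \<Longrightarrow> {a,b} \<in> E \<Longrightarrow> b \<in> V - {u,v} \<Longrightarrow> b \<in> Comp c"
proof -
  assume a: "a \<in> Comp c" and ab: "{a,b} \<in> E" and b: "b \<in> V - {u,v}"
  have "{a,b} \<in> E'" using a ab b by (auto simp: del_vertices_E_def Comp_def)
  moreover have "a \<noteq> b" using ab edge_V by blast
  ultimately have "adj E' a b" by (simp add: adj_def)
  moreover have "reach E' c a" using a by (simp add: Comp_def)
  ultimately have "reach E' c b" using reach_step by metis
  then show ?thesis using b by (simp add: Comp_def)
qed

lemma Comp_meet: "f \<in> E \<Longrightarrow> p \<in> f \<Longrightarrow> q \<in> f \<Longrightarrow> p \<in> Comp c \<Longrightarrow> q \<in> Comp d \<Longrightarrow> reach E' c d"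
proof -
  assume f: "f \<in> E" "p \<in> f" "q \<in> f" and p: "p \<in> Comp c" and q: "q \<in> Comp d"
  obtain a b where ab: "f = {a,b}" using edgeE f(1) by blast
  have "q \<in> Comp c"
  proof (cases "p = q")
    case True then show ?thesis using p by simp
  next
    case False
    then have "f = {p,q}" using ab f by auto
    then show ?thesis using Comp_close[of p c q] p q f(1) Comp_sub by blast
  qed
  then have "reach E' c q" "reach E' d q" using q by (auto simp: Comp_def)
  then show ?thesis using reach_sym reach_trans by metis
qed

lemma cutH: "ecut H S \<subseteq> insert {u,v} (ecut H' S)"
  unfolding ecut_def H'_def by blast

lemma tight_edge: "tight S h \<Longrightarrow> h \<in> ecut H' S"
proof -
  assume t: "tight S h"
  show ?thesis
  proof (rule ccontr)
    assume "h \<notin> ecut H' S"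
    then have "ecut H' S = {}" using t by (auto simp: tight_def)
    then have "ecut H S \<subseteq> {{u,v}}" using cutH[of S] by blast
    moreover have "S \<subseteq> V" "S \<noteq> {}" "S \<noteq> V" using t vV by (auto simp: tight_def)
    ultimately show False using Htec by blast
  qed
qed

lemma W_lemma:
  assumes P: "P \<subseteq> V" and Q: "Q \<subseteq> V" and uPQ: "u \<notin> P - Q" and vPQ: "v \<notin> P - Q"
    and cP: "ecut H P \<subseteq> {{u,v}, fP}" and cQ: "ecut H Q \<subseteq> {{u,v}, fQ}"
    and disj: "fP \<inter> Comp c = {} \<or> fQ \<inter> Comp c = {}"
    and ne: "Comp c \<inter> (P - Q) \<noteq> {}"
  shows False
proof -
  define W where "W = Comp c \<inter> (P - Q)"
  have exits: "g \<in> {fP, fQ} \<and> g \<inter> Comp c \<noteq> {}" if g: "g \<in> ecut H W" for g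
  proof -
    obtain w x where gwx: "g \<in> H" "g = {w,x}" "w \<in> W" "x \<notin> W" using g unfolding ecut_def by blast
    have wC: "w \<in> Comp c" and wP: "w \<in> P" and wQ: "w \<notin> Q" using gwx W_def by auto
    have wuv: "w \<noteq> u" "w \<noteq> v" using wC Comp_sub by auto
    have xV: "x \<in> V" using H_V gwx by blast
    have gne: "g \<noteq> {u,v}" using gwx wuv by (auto simp: doubleton_eq_iff)
    have gC: "g \<inter> Comp c \<noteq> {}" using gwx wC by blast
    show ?thesis
    proof (cases "x \<in> P")
      case False
      then have "g \<in> ecut H P" using gwx wP False unfolding ecut_def by blast
      then show ?thesis using cP gne gC by blast
    next
      case xP: True
      show ?thesis
      proof (cases "x \<in> Q")
        case True
        have "g = {x,w}" using gwx by (simp add: insert_commute)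
        then have "g \<in> ecut H Q" using gwx True wQ unfolding ecut_def by blast
        then show ?thesis using cQ gne gC by blast
      next
        case False
        then have "x \<in> V - {u,v}" using xV xP uPQ vPQ by blast
        then have "x \<in> Comp c" using Comp_close[of w c x] wC gwx HE by blast
        then have "x \<in> W" using xP False W_def by blast
        then show ?thesis using gwx by blast
      qed
    qed
  qed
  have "ecut H W \<subseteq> {fP}  \<or> ecut H W \<subseteq> {fQ}" using exits disj by blast
  moreover have "W \<subseteq> V" "u \<notin> W" "W \<noteq> {}" using W_def Comp_sub ne by auto
  ultimately show False using W_contra by blast
qed

lemma T_lemma:
  assumes t1: "tight S1 f1" and t2: "tight S2 f2"
    and m1: "f1 \<inter> Comp c \<noteq> {}" and m2: "f2 \<inter> Comp c = {}"
  shows False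
proof -
  have "f1 \<in> ecut H' S1" using tight_edge t1 .
  then obtain a b where ab: "f1 \<in> H'" "f1 = {a,b}" "a \<in> S1" "b \<notin> S1" unfolding ecut_def by blast
  have f1H: "f1 \<in> H" "f1 \<noteq> {u,v}" using ab by (auto simp: H'_def)
  have abV: "a \<in> V" "b \<in> V" using H_V f1H ab by blast+
  have c1: "ecut H S1 \<subseteq> {{u,v}, f1}" using cutH[of S1] t1 by (auto simp: tight_def)
  have c2: "ecut H S2 \<subseteq> {{u,v}, f2}" using cutH[of S2] t2 by (auto simp: tight_def)
  have f12: "f1 \<noteq> f2" using m1 m2 by blast
  have nc: "f1 \<notin> ecut H S2" using c2 f1H f12 by blast
  have ab2: "a \<in> S2 \<longleftrightarrow> b \<in> S2"
  proof
    assume "a \<in> S2" show "b \<in> S2"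
      using nc ab f1H \<open>a \<in> S2\<close> unfolding ecut_def by blast
  next
    assume "b \<in> S2"
    have "f1 = {b,a}" using ab by (simp add: insert_commute)
    then show "a \<in> S2" using nc f1H \<open>b \<in> S2\<close> unfolding ecut_def by blast
  qed
  have S: "S1 \<subseteq> V" "S2 \<subseteq> V" "u \<in> S1" "u \<in> S2" "v \<notin> S1" "v \<notin> S2"
    using t1 t2 by (auto simp: tight_def)
  show False
  proof (cases "a \<in> S2")
    case True
    then have bS: "b \<in> S2 - S1" using ab2 ab by blast
    then have "b \<in> V - {u,v}" using abV S by blast
    moreover have "a \<in> Comp c \<or> b \<in> Comp c" using m1 ab by blast
    ultimately have "b \<in> Comp c" using Comp_close[of a c b] f1H ab HE by blast
    then show False
      using W_lemma[of S2 S1 f2 f1 c] S c1 c2 m2 bS by blast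
  next
    case False
    then have aS: "a \<in> S1 - S2" using ab by blast
    then have "a \<in> V - {u,v}" using abV S by blast
    moreover have "a \<in> Comp c \<or> b \<in> Comp c" using m1 ab by blast
    moreover have "{b,a} \<in> E" using f1H ab HE by (auto simp: insert_commute)
    ultimately have "a \<in> Comp c" using Comp_close[of b c a] by blast
    then show False
      using W_lemma[of S1 S2 f1 f2 c] S c1 c2 m2 aS by blast
  qed
qed

end



context ctx begin

lemma H_conn: "x \<in> V \<Longrightarrow> y \<in> V \<Longrightarrow> reach H x y"
proof -
  assume x: "x \<in> V" and y: "y \<in> V"
  have "connected_graph V H"
    unfolding conn_iff[OF edges_in_E[OF HE]]
  proof (intro conjI allI impI)
    show "V \<noteq> {}" using uV by blast
    fix S assume "S \<subseteq> V" "S \<noteq> {}" "S \<noteq> V"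
    then have "\<not> ecut H S \<subseteq> {undefined}" using Htec by blast
    then show "ecut H S \<noteq> {}" by blast
  qed
  then show ?thesis using x y unfolding connected_graph_def by blast
qed

lemma exchange:
  assumes c: "c \<in> V - {u,v}" and nt: "\<And>S h. tight S h \<Longrightarrow> h \<inter> Comp c = {}"
  shows "\<exists>g\<in>E. g \<noteq> {u,v} \<and> (\<forall>S h. S \<subseteq> V \<longrightarrow> S \<noteq> {} \<longrightarrow> S \<noteq> V \<longrightarrow> \<not> ecut (insert g (H - {{u,v}})) S \<subseteq> {h})"
proof -
  define D where "D = Comp c"
  define HDu where "HDu = {f\<in>H. f \<subseteq> D \<union> {u}}"
  define HDv where "HDv = {f\<in>H. f \<subseteq> D \<union> {v}}"
  define HD where "HD = {f\<in>H. f \<subseteq> D}"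
  define A where "A = {x. reach HDu u x}"
  define B where "B = {x. reach HDv v x}"
  have cD: "c \<in> D" using c by (simp add: D_def Comp_def)
  have DV: "D \<subseteq> V - {u,v}" using Comp_sub D_def by simp
  have uA: "u \<in> A" by (simp add: A_def)
  have vB: "v \<in> B" by (simp add: B_def)
  have A_sub: "A \<subseteq> D \<union> {u}"
  proof
    fix x assume "x \<in> A"
    then have r: "reach HDu u x" by (simp add: A_def)
    show "x \<in> D \<union> {u}"
    proof (rule reach_closed[OF r])
      show "u \<in> D \<union> {u}" by simp
      fix a b assume "adj HDu a b" "a \<in> D \<union> {u}"
      then show "b \<in> D \<union> {u}" unfolding adj_def HDu_def by blast
    qed
  qed
  have B_sub: "B \<subseteq> D \<union> {v}"
  proof
    fix x assume "x \<in> B"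
    then have r: "reach HDv v x" by (simp add: B_def)
    show "x \<in> D \<union> {v}"
    proof (rule reach_closed[OF r])
      show "v \<in> D \<union> {v}" by simp
      fix a b assume "adj HDv a b" "a \<in> D \<union> {v}"
      then show "b \<in> D \<union> {v}" unfolding adj_def HDv_def by blast
    qed
  qed
  have DAB: "D \<subseteq> A \<union> B"
  proof
    fix z assume zD: "z \<in> D"
    have key: "(w \<in> D \<and> reach HD z w) \<or> reach HDu z u \<or> reach HDv z v" if r: "reach H z w" for w
      using r unfolding reach_def[of H]
    proof (induction rule: rtranclp_induct)
      case base then show ?case using zD by simp
    next
      case (step y w)
      from step.IH show ?case
      proof (elim disjE conjE)
        assume yD: "y \<in> D" and ry: "reach HD z y"
        have yw: "{y,w} \<in> H" "y \<noteq> w" using step.hyps(2) unfolding adj_def by blast+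
        have wV: "w \<in> V" using H_V yw(1) by blast
        show ?thesis
        proof (cases "w \<in> D")
          case True
          then have "{y,w} \<in> HD" using yw yD HD_def by blast
          then have "adj HD y w" using yw by (simp add: adj_def)
          then show ?thesis using ry True reach_step by metis
        next
          case wD: False
          show ?thesis
          proof (cases "w = u")
            case True
            have "HD \<subseteq> HDu" unfolding HD_def HDu_def by blast
            then have "reach HDu z y" using ry reach_mono by metis
            moreover have "{y,w} \<in> HDu" using yw yD True HDu_def by blast
            then have "adj HDu y w" using yw by (simp add: adj_def)
            ultimately show ?thesis using True reach_step by metis
          next
            case wu: False
            show ?thesis
            proof (cases "w = v")
              case True
              have "HD \<subseteq> HDv" unfolding HD_def HDv_def by blast
              then have "reach HDv z y" using ry reach_mono by metis
              moreover have "{y,w} \<in> HDv" using yw yD True HDv_def by blast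
              then have "adj HDv y w" using yw by (simp add: adj_def)
              ultimately show ?thesis using True reach_step by metis
            next
              case False
              then have "w \<in> V - {u,v}" using wV wu by blast
              then have "w \<in> D" using Comp_close[of y c w] yD yw(1) HE D_def by blast
              then show ?thesis using wD by blast
            qed
          qed
        qed
      next
        assume "reach HDu z u" then show ?thesis by blast
      next
        assume "reach HDv z v" then show ?thesis by blast
      qed
    qed
    have "z \<in> V" using zD DV by blast
    then have "reach H z u" using H_conn uV by blast
    then have "(u \<in> D \<and> reach HD z u) \<or> reach HDu z u \<or> reach HDv z v" by (rule key)
    moreover have "u \<notin> D" using DV by blast
    ultimately have "reach HDu z u \<or> reach HDv z v" by blast
    then have "reach HDu u z \<or> reach HDv v z" using reach_sym[of HDu z u] reach_sym[of HDv z v] by blast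
    then show "z \<in> A \<union> B" unfolding A_def B_def by blast
  qed
  obtain x y where xA: "x \<in> A" and yB: "y \<in> B" and xyE: "{x,y} \<in> E" and xyne: "{x,y} \<noteq> {u,v}"
  proof (cases "D \<inter> A = {}")
    case False
    then obtain p where pD: "p \<in> D" and pA: "p \<in> A" by blast
    have "p \<in> V - {u}" "v \<in> V - {u}" using pD DV vV uv by blast+
    then have rpv: "reach (del_vertices_E E {u}) p v" by (rule cu)
    have "v \<notin> A" using A_sub DV uv by blast
    from reach_cross[OF rpv pA this] obtain a b where ab: "adj (del_vertices_E E {u}) a b" "a \<in> A" "b \<notin> A"
      by blast
    have abE: "{a,b} \<in> E" "a \<noteq> u" "b \<noteq> u" using ab(1) unfolding adj_def del_vertices_E_def by blast+
    have aD: "a \<in> D" using A_sub ab(2) abE(2) by blast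
    have bV: "b \<in> V" using edge_V abE(1) by blast
    have bB: "b \<in> B"
    proof (cases "b = v")
      case True then show ?thesis using vB by simp
    next
      case False
      then have "b \<in> V - {u,v}" using bV abE(3) by blast
      then have "b \<in> D" using Comp_close[of a c b] aD abE(1) D_def by blast
      then show ?thesis using DAB ab(3) by blast
    qed
    have "{a,b} \<noteq> {u,v}" using aD DV by (auto simp: doubleton_eq_iff)
    then show ?thesis using that ab(2) bB abE(1) by blast
  next
    case True
    have "c \<in> V - {v}" "u \<in> V - {v}" using c uV uv by blast+
    then have rcu: "reach (del_vertices_E E {v}) c u" by (rule cv)
    have "u \<notin> D" using DV by blast
    from reach_cross[OF rcu cD this] obtain a b where ab: "adj (del_vertices_E E {v}) a b" "a \<in> D" "b \<notin> D"
      by blast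
    have abE: "{a,b} \<in> E" "a \<noteq> v" "b \<noteq> v" using ab(1) unfolding adj_def del_vertices_E_def by blast+
    have bV: "b \<in> V" using edge_V abE(1) by blast
    have bu: "b = u"
    proof (rule ccontr)
      assume "b \<noteq> u"
      then have "b \<in> V - {u,v}" using bV abE(3) by blast
      then have "b \<in> D" using Comp_close[of a c b] ab(2) abE(1) D_def by blast
      then show False using ab(3) by blast
    qed
    have aB: "a \<in> B" using DAB ab(2) True by blast
    have "{u,a} \<in> E" using abE(1) bu by (simp add: insert_commute)
    moreover have "{u,a} \<noteq> {u,v}" using ab(2) DV by (auto simp: doubleton_eq_iff)
    ultimately show ?thesis using that uA aB by blast
  qed
  define g where "g = {x,y}"
  define F where "F = insert g (H - {{u,v}})"
  have gE: "g \<in> E" using xyE g_def by simp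
  have FE: "F \<subseteq> E" using gE HE F_def by blast
  have eF: "edges_in F V" using edges_in_E[OF FE] .
  have eHV: "edges_in H V" using edges_in_E[OF HE] .
  have gD: "g \<inter> D \<noteq> {}"
  proof -
    have "x \<in> D \<union> {u}" "y \<in> D \<union> {v}" using xA yB A_sub B_sub by blast+
    then show ?thesis using xyne g_def by blast
  qed
  have main: "\<not> ecut F S \<subseteq> {h}" if S: "S \<subseteq> V" "S \<noteq> {}" "S \<noteq> V" for S h
  proof
    assume cF: "ecut F S \<subseteq> {h}"
    have cH: "ecut H S \<subseteq> insert {u,v} (ecut F S)" for S
      unfolding ecut_def F_def by blast
    have "\<not> ecut H S \<subseteq> {h}" using Htec S by blast
    then have "{u,v} \<in> ecut H S" using cH[of S] cF by blast
    then obtain a b where ab0: "{u,v} = {a,b}" "a \<in> S" "b \<notin> S" unfolding ecut_def by blast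
    have "(u = a \<and> v = b) \<or> (u = b \<and> v = a)" using ab0(1) by (simp add: doubleton_eq_iff)
    then have sep: "(u \<in> S \<and> v \<notin> S) \<or> (v \<in> S \<and> u \<notin> S)" using ab0 by blast
    define S0 where "S0 = (if u \<in> S then S else V - S)"
    have S0F: "ecut F S0 = ecut F S" using cut_compl[OF eF S(1)] S0_def by simp
    have S0H: "ecut H S0 = ecut H S" using cut_compl[OF eHV S(1)] S0_def by simp
    have S0p: "S0 \<subseteq> V \<and> u \<in> S0 \<and> v \<notin> S0"
    proof (cases "u \<in> S")
      case True then show ?thesis using sep S0_def S(1) by simp
    next
      case False then show ?thesis using sep S0_def uV by simp
    qed
    then have S0p: "S0 \<subseteq> V" "u \<in> S0" "v \<notin> S0" by blast+
    have "ecut H' S0 \<subseteq> ecut F S0" unfolding ecut_def H'_def F_def by blast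
    then have "tight S0 h" using S0p S0F cF unfolding tight_def by blast
    then have hD: "h \<inter> D = {}" using nt D_def by blast
    have cH0: "ecut H S0 \<subseteq> {{u,v}, h}" using S0H cH[of S] cF by blast
    have noc: "f \<notin> ecut H S0" if "f \<in> H" "f \<inter> D \<noteq> {}" "f \<noteq> {u,v}" for f
      using that cH0 hD by blast
    have AS: "A \<subseteq> S0"
    proof
      fix z assume "z \<in> A"
      then have r: "reach HDu u z" by (simp add: A_def)
      show "z \<in> S0"
      proof (rule reach_closed[OF r S0p(2)])
        fix a b assume ab: "adj HDu a b" "a \<in> S0"
        show "b \<in> S0"
        proof (rule ccontr)
          assume "b \<notin> S0"
          then have "{a,b} \<in> ecut H S0" using ab unfolding adj_def HDu_def ecut_def by blast
          moreover have abH: "{a,b} \<in> H" "{a,b} \<subseteq> D \<union> {u}" "a \<noteq> b" using ab(1) unfolding adj_def HDu_def by blast+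
          moreover have "{a,b} \<inter> D \<noteq> {}" using abH by blast
          moreover have "{a,b} \<noteq> {u,v}" using abH DV uv by (auto simp: doubleton_eq_iff)
          ultimately show False using noc by blast
        qed
      qed
    qed
    have BS: "B \<subseteq> V - S0"
    proof
      fix z assume "z \<in> B"
      then have r: "reach HDv v z" by (simp add: B_def)
      have "z \<in> - S0"
      proof (rule reach_closed[OF r])
        show "v \<in> - S0" using S0p by blast
        fix a b assume ab: "adj HDv a b" "a \<in> - S0"
        show "b \<in> - S0"
        proof (rule ccontr)
          assume "b \<notin> - S0"
          have ba: "{b,a} = {a,b}" by (rule insert_commute)
          have abH: "{a,b} \<in> H" "{a,b} \<subseteq> D \<union> {v}" "a \<noteq> b" using ab(1) unfolding adj_def HDv_def by blast+
          have baH: "{b,a} \<in> H" using abH(1) ba by simp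
          have "b \<in> S0" "a \<notin> S0" using ab(2) \<open>b \<notin> - S0\<close> by blast+
          then have "{b,a} \<in> ecut H S0" using baH unfolding ecut_def by blast
          moreover note baH
          moreover have "{b,a} \<inter> D \<noteq> {}" using abH(2,3) by blast
          moreover have "{a,b} \<noteq> {u,v}" using abH DV uv by (auto simp: doubleton_eq_iff)
          then have "{b,a} \<noteq> {u,v}" using ba by simp
          ultimately show False using noc by blast
        qed
      qed
      moreover have "z \<in> V" using \<open>z \<in> B\<close> B_sub DV vV by blast
      ultimately show "z \<in> V - S0" by blast
    qed
    have "x \<in> S0" "y \<notin> S0" using xA yB AS BS by blast+
    moreover have "g \<in> F" using F_def by simp
    ultimately have "g \<in> ecut F S0" unfolding ecut_def g_def by blast
    then have "g = h" using S0F cF by blast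
    then show False using gD hD by blast
  qed
  have "\<forall>S h. S \<subseteq> V \<longrightarrow> S \<noteq> {} \<longrightarrow> S \<noteq> V \<longrightarrow> \<not> ecut (insert g (H - {{u,v}})) S \<subseteq> {h}"
    using main unfolding F_def by blast
  moreover have "g \<noteq> {u,v}" using xyne g_def by simp
  ultimately show ?thesis using gE by blast
qed

lemma good_comp:
  assumes x0: "x0 \<in> V - {u,v}" and y0: "y0 \<in> V - {u,v}" and nr: "\<not> reach E' x0 y0"
  shows "\<exists>c\<in>V - {u,v}. \<forall>S h. tight S h \<longrightarrow> h \<inter> Comp c = {}"
proof (rule ccontr)
  assume na: "\<not> ?thesis"
  have "\<not> (\<forall>S h. tight S h \<longrightarrow> h \<inter> Comp x0 = {})" using na x0 by blast
  then obtain S1 h1 where t1: "tight S1 h1" "h1 \<inter> Comp x0 \<noteq> {}" by blast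
  have "\<not> (\<forall>S h. tight S h \<longrightarrow> h \<inter> Comp y0 = {})" using na y0 by blast
  then obtain S2 h2 where t2: "tight S2 h2" "h2 \<inter> Comp y0 \<noteq> {}" by blast
  have "h2 \<in> H" using tight_edge[OF t2(1)] unfolding ecut_def H'_def by blast
  then have h2E: "h2 \<in> E" using HE by blast
  have "h2 \<inter> Comp x0 = {}"
  proof (rule ccontr)
    assume "h2 \<inter> Comp x0 \<noteq> {}"
    then obtain p q where pq: "p \<in> h2" "p \<in> Comp x0" "q \<in> h2" "q \<in> Comp y0" using t2(2) by blast
    have "reach E' x0 y0" by (rule Comp_meet[OF h2E pq(1) pq(3) pq(2) pq(4)])
    then show False using nr by blast
  qed
  then show False using T_lemma[OF t1(1) t2(1) t1(2)] by blast
qed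

end



lemma edges_in_sg: "simple_graph V E \<Longrightarrow> F \<subseteq> E \<Longrightarrow> edges_in F V"
  unfolding simple_graph_def edges_in_def by blast

theorem lemma1:
  fixes V :: "'a set" and E :: "'a set set" and u v :: 'a
  assumes "simple_graph V E"
    and "two_vertex_connected V E"
    and "irrelevant_edge V E u v"
  shows "\<exists>H. min_2ecss V E H \<and> {u, v} \<notin> H"
proof -
  have sg: "simple_graph V E" using assms(1) .
  have card3: "card V \<ge> 3" and no1: "\<not> (\<exists>S. vertex_cut V E 1 S)"
    using assms(2) unfolding two_vertex_connected_def by blast+
  have conE: "connected_graph V E" using assms(2) unfolding two_vertex_connected_def by blast
  have vc: "vertex_cut V E 2 {u,v}" using assms(3) unfolding irrelevant_edge_def by blast
  have uvV: "{u,v} \<subseteq> V" and card2: "card {u,v} = 2" using vc unfolding vertex_cut_def by blast+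
  obtain x0 y0 where x0: "x0 \<in> V - {u,v}" and y0: "y0 \<in> V - {u,v}"
    and nr: "\<not> reach (del_vertices_E E {u,v}) x0 y0" using vc unfolding vertex_cut_def by blast
  have uv: "u \<noteq> v" using card2 by auto
  have cut1: "reach (del_vertices_E E {a}) x y" if "a \<in> V" "x \<in> V - {a}" "y \<in> V - {a}" for a x y
  proof (rule ccontr)
    assume "\<not> reach (del_vertices_E E {a}) x y"
    moreover have "{a} \<subseteq> V" "card {a} = 1" using that(1) by simp_all
    ultimately have "vertex_cut V E 1 {a}" using that(2,3) unfolding vertex_cut_def by blast
    then show False using no1 by blast
  qed
  have finV: "finite V" using sg unfolding simple_graph_def by blast
  have "E \<subseteq> Pow V"
  proof
    fix f assume "f \<in> E"
    then obtain a b where "f = {a,b}" "a \<in> V" "b \<in> V" using sg unfolding simple_graph_def by blast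
    then show "f \<in> Pow V" by simp
  qed
  moreover have "finite (Pow V)" using finV by simp
  ultimately have finE: "finite E" by (rule finite_subset)
  have E2: "spanning_2ec V E E"
    unfolding spanning_2ec_def two_edge_connected_def
  proof (intro conjI ballI subset_refl conE)
    fix f assume fE: "f \<in> E"
    then obtain a b where ab: "f = {a,b}" "a \<noteq> b" "a \<in> V" "b \<in> V"
      using sg unfolding simple_graph_def by blast
    have "V - {a,b} \<noteq> {}"
    proof
      assume "V - {a,b} = {}"
      then have "V \<subseteq> {a,b}" by blast
      then have "card V \<le> card {a,b}" by (intro card_mono) auto
      also have "\<dots> \<le> 2" by (simp add: card_insert_if)
      finally show False using card3 by simp
    qed
    then obtain w where w: "w \<in> V" "w \<noteq> a" "w \<noteq> b" by blast
    have suba: "del_vertices_E E {a} \<subseteq> E - {f}" using ab unfolding del_vertices_E_def by blast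
    have subb: "del_vertices_E E {b} \<subseteq> E - {f}" using ab unfolding del_vertices_E_def by blast
    have tow: "reach (E - {f}) z w" if z: "z \<in> V" for z
    proof (cases "z = a")
      case True
      have "reach (del_vertices_E E {b}) z w" using cut1[of b z w] True ab w by blast
      then show ?thesis using reach_mono[OF subb] by blast
    next
      case False
      have "reach (del_vertices_E E {a}) z w" using cut1[of a z w] False z ab w by blast
      then show ?thesis using reach_mono[OF suba] by blast
    qed
    show "connected_graph V (E - {f})" unfolding connected_graph_def
    proof (intro conjI ballI)
      show "V \<noteq> {}" using w by blast
      fix x y assume "x \<in> V" "y \<in> V"
      then have "reach (E - {f}) x w" "reach (E - {f}) y w" using tow by blast+
      then show "reach (E - {f}) x y" using reach_sym reach_trans by metis
    qed
  qed
  obtain H where Hs: "spanning_2ec V E H" and Hmin: "\<forall>H'. spanning_2ec V E H' \<longrightarrow> card H \<le> card H'"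
    using ex_has_least_nat[of "spanning_2ec V E" E card] E2 by blast
  show ?thesis
  proof (cases "{u,v} \<in> H")
    case False
    then show ?thesis using Hs Hmin unfolding min_2ecss_def by blast
  next
    case True
    have HE: "H \<subseteq> E" using Hs unfolding spanning_2ec_def by blast
    have Htec0: "two_edge_connected V H" using Hs unfolding spanning_2ec_def by blast
    have Htec: "\<And>S h. S \<subseteq> V \<Longrightarrow> S \<noteq> {} \<Longrightarrow> S \<noteq> V \<Longrightarrow> \<not> ecut H S \<subseteq> {h}"
      using Htec0 unfolding tec_iff[OF edges_in_sg[OF sg HE]] by blast
    interpret ctx V E H u v
    proof
      show "simple_graph V E" by (rule sg)
      show "H \<subseteq> E" by (rule HE)
      show "\<And>S h. S \<subseteq> V \<Longrightarrow> S \<noteq> {} \<Longrightarrow> S \<noteq> V \<Longrightarrow> \<not> ecut H S \<subseteq> {h}" by (rule Htec)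
      show "{u,v} \<in> H" by (rule True)
      show "u \<noteq> v" by (rule uv)
      show "u \<in> V" "v \<in> V" using uvV by blast+
      show "reach (del_vertices_E E {u}) x y" if "x \<in> V - {u}" "y \<in> V - {u}" for x y
        using cut1[of u x y] that uvV by simp
      show "reach (del_vertices_E E {v}) x y" if "x \<in> V - {v}" "y \<in> V - {v}" for x y
        using cut1[of v x y] that uvV by simp
    qed
    obtain c where c: "c \<in> V - {u,v}" and nt: "\<forall>S h. tight S h \<longrightarrow> h \<inter> Comp c = {}"
      using good_comp[OF x0 y0 nr] by blast
    have "\<exists>g\<in>E. g \<noteq> {u,v} \<and> (\<forall>S h. S \<subseteq> V \<longrightarrow> S \<noteq> {} \<longrightarrow> S \<noteq> V \<longrightarrow> \<not> ecut (insert g (H - {{u,v}})) S \<subseteq> {h})"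
      using exchange[OF c nt[rule_format]] .
    then obtain g where gE: "g \<in> E" and gne: "g \<noteq> {u,v}"
      and gc: "\<forall>S h. S \<subseteq> V \<longrightarrow> S \<noteq> {} \<longrightarrow> S \<noteq> V \<longrightarrow> \<not> ecut (insert g (H - {{u,v}})) S \<subseteq> {h}"
      by blast
    define F where "F = insert g (H - {{u,v}})"
    have FE: "F \<subseteq> E" using gE HE F_def by blast
    have "two_edge_connected V F"
      unfolding tec_iff[OF edges_in_sg[OF sg FE]]
    proof (intro conjI allI impI)
      show "V \<noteq> {}" using uvV by blast
      fix S h assume "S \<subseteq> V" "S \<noteq> {}" "S \<noteq> V"
      then show "\<not> ecut F S \<subseteq> {h}" using gc unfolding F_def by blast
    qed
    then have Fs: "spanning_2ec V E F" using FE unfolding spanning_2ec_def by blast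
    have finH: "finite H" using HE finE finite_subset by blast
    have "card F \<le> Suc (card (H - {{u,v}}))"
      unfolding F_def using finH by (simp add: card_insert_if)
    also have "Suc (card (H - {{u,v}})) = card H"
    proof -
      have "card H > 0" using finH True card_gt_0_iff by blast
      then show ?thesis using finH True by (simp add: card_Diff_singleton)
    qed
    finally have "card F \<le> card H" .
    then have "min_2ecss V E F" using Fs Hmin unfolding min_2ecss_def by auto
    moreover have "{u,v} \<notin> F" using gne F_def by simp
    ultimately show ?thesis by blast
  qed
qed


end
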